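(* Let $w\geqslant 2$ and $h\geqslant 1$ be integers, let $\underline h=2^{\lfloor\log_2 h\rfloor}$, and let $\mathcal{H}_{h,w}$ be the set of (mostly vertical, inclined to the right) fast Hough transform patterns on the $h\times w$ image. Then $$\mathrm{OR}(\mathcal{H}_{h,w})\geqslant 3\,w\,\underline h\,\log_3\underline h.$$
   Context: Image: for integers $h\geqslant1$ (height) and $w\geqslant2$ (width), an image is the set $I$ of $wh$ pixel variables $p_{ij}$, $i=0,\dots,h-1$ (row index, counted from the bottom), $j=0,\dots,w-1$ (column index). A pattern is a nonempty subset of $I$; a pattern set $\mathcal{T}=\{T_k\}_{k=1}^m$ is a nonempty set of $m$ distinct patterns. Computing $\mathcal{T}$ means computing simultaneously $y_k=\sum_{p\in T_k}p$, $k=1,\dots,m$, where the "sum" is a commutative semigroup operation on pixel values. Circuits: a circuit is a directed acyclic graph with $wh$ input nodes $p_{ij}$ of fanin zero and $m$ output nodes $y_k$ of fanout zero; every node of nonzero fanin (a gate) may have any positive number of incoming edges and computes the semigroup sum of the values of its in-neighbours. The size of a circuit is its number of edges. A circuit computes $\mathcal{T}$ if, for every assignment of values to the inputs, output $y_k$ equals $\sum_{p\in T_k}p$ for all $k$. $\mathrm{OR}(\mathcal{T})$ is the minimal size of a circuit computing $\mathcal{T}$ when pixel values lie in $\{0,1\}$ and the operation is logical $\vee$. FHT patterns: for a pattern $T$ containing exactly one pixel in each of its rows, let $\Delta(T)=(j_{top}-j_{bot})\bmod w$, where $j_{top},j_{bot}$ are the column indices of the topmost and bottommost pixels of $T$,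 and let $\mathit{tran}_{a,b}(T)=\{p_{i+a,\,(j+b)\bmod w}\mid p_{ij}\in T\}$. For $h=2^d$ define $\mathcal{H}_0=\{\{p_{00}\},\{p_{01}\},\dots,\{p_{0,w-1}\}\}$ and, for $k=1,\dots,d$, $\mathcal{H}_k=\{T\cup\mathit{tran}_{2^{k-1},\,\Delta(T)+s}(T)\mid T\in\mathcal{H}_{k-1},\ s\in\{0,1\}\}$; set $\mathcal{H}_{h,w}=\mathcal{H}_d$. For arbitrary $h\geqslant1$, let $\overline h=2^{\lceil\log_2h\rceil}$, view the $h\times w$ image $I$ as the bottom $h$ rows of the $\overline h\times w$ image, and set $\mathcal{H}_{h,w}=\{T\cap I\mid T\in\mathcal{H}_{\overline h,w}\}$. *)

theory Defs
  imports Complex_Main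
begin

text \<open>Pixels p_ij are represented as pairs (i, j) :: nat \<times> nat
  (i = row index counted from the bottom, j = column index).\<close>

type_synonym pixel = "nat \<times> nat"

definition image :: "nat \<Rightarrow> nat \<Rightarrow> pixel set" where
  "image h w = {(i, j). i < h \<and> j < w}"

text \<open>Column index of the topmost / bottommost pixel of a pattern
  (meaningful for patterns with exactly one pixel per row).\<close>
definition top_col :: "pixel set \<Rightarrow> nat" where
  "top_col T = (THE j. (Max (fst ` T), j) \<in> T)"

definition bot_col :: "pixel set \<Rightarrow> nat" where
  "bot_col T = (THE j. (Min (fst ` T), j) \<in> T)"

definition Delta :: "nat \<Rightarrow> pixel set \<Rightarrow> nat" where
  "Delta w T = nat ((int (top_col T) - int (bot_col T)) mod int w)"

definition tran :: "nat \<Rightarrow> nat \<Rightarrow> nat \<Rightarrow> pixel set \<Rightarrow> pixel set" where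
  "tran w a b T = {(i + a, (j + b) mod w) | i j. (i, j) \<in> T}"

fun FHT_level :: "nat \<Rightarrow> nat \<Rightarrow> pixel set set" where
  "FHT_level w 0 = {{(0, j)} | j. j < w}"
| "FHT_level w (Suc k) =
     {T \<union> tran w (2 ^ k) (Delta w T + s) T | T s. T \<in> FHT_level w k \<and> s \<in> {0, 1}}"

definition FHT :: "nat \<Rightarrow> nat \<Rightarrow> pixel set set" where
  "FHT h w = {T \<inter> image h w | T. T \<in> FHT_level w (nat \<lceil>log 2 (real h)\<rceil>)}"

record circuit =
  nodes :: "nat set"
  edges :: "(nat \<times> nat) set"
  inp :: "pixel \<Rightarrow> nat"
  out :: "pixel set \<Rightarrow> nat"

definition is_circuit :: "nat \<Rightarrow> nat \<Rightarrow> pixel set set \<Rightarrow> circuit \<Rightarrow> bool" where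
  "is_circuit h w \<T> C \<longleftrightarrow>
     finite (nodes C) \<and> edges C \<subseteq> nodes C \<times> nodes C \<and> acyclic (edges C) \<and>
     inj_on (inp C) (image h w) \<and> inp C ` image h w \<subseteq> nodes C \<and>
     (\<forall>p\<in>image h w. \<forall>u. (u, inp C p) \<notin> edges C) \<and>
     (\<forall>v\<in>nodes C. (\<forall>u. (u, v) \<notin> edges C) \<longrightarrow> v \<in> inp C ` image h w) \<and>
     inj_on (out C) \<T> \<and> out C ` \<T> \<subseteq> nodes C \<and>
     (\<forall>T\<in>\<T>. \<forall>v. (out C T, v) \<notin> edges C)"

definition or_eval :: "nat \<Rightarrow> nat \<Rightarrow> circuit \<Rightarrow> (pixel \<Rightarrow> bool) \<Rightarrow> (nat \<Rightarrow> bool) \<Rightarrow> bool" where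
  "or_eval h w C x val \<longleftrightarrow>
     (\<forall>p\<in>image h w. val (inp C p) = x p) \<and>
     (\<forall>v\<in>nodes C. (\<exists>u. (u, v) \<in> edges C) \<longrightarrow> val v = (\<exists>u. (u, v) \<in> edges C \<and> val u))"

definition or_computes :: "nat \<Rightarrow> nat \<Rightarrow> pixel set set \<Rightarrow> circuit \<Rightarrow> bool" where
  "or_computes h w \<T> C \<longleftrightarrow> is_circuit h w \<T> C \<and>
     (\<forall>x val. or_eval h w C x val \<longrightarrow> (\<forall>T\<in>\<T>. val (out C T) = (\<exists>p\<in>T. x p)))"

definition OR_complexity :: "nat \<Rightarrow> nat \<Rightarrow> pixel set set \<Rightarrow> nat" where
  "OR_complexity h w \<T> = (INF C \<in> {C. or_computes h w \<T> C}. card (edges C))"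

end

theory Submission
  imports Defs
begin


definition func :: "pixel set \<Rightarrow> bool" where
  "func P \<longleftrightarrow> (\<forall>i j j'. (i,j)\<in>P \<longrightarrow> (i,j')\<in>P \<longrightarrow> j = j')"

definition good :: "nat \<Rightarrow> nat \<Rightarrow> pixel set \<Rightarrow> bool" where
  "good w k P \<longleftrightarrow> P \<subseteq> image (2^k) w \<and> (\<forall>i<2^k. \<exists>j. (i,j)\<in>P) \<and> func P"

lemma tran_mem: "x \<in> tran w a b T \<longleftrightarrow> (\<exists>i j. x = (i+a, (j+b) mod w) \<and> (i,j)\<in>T)"
  unfolding tran_def by blast

lemma tran_mem2: "(i', j') \<in> tran w a b T \<longleftrightarrow> (\<exists>i j. i' = i+a \<and> j' = (j+b) mod w \<and> (i,j)\<in>T)"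
  unfolding tran_def by blast

lemma tran_Un: "tran w a b (A \<union> B) = tran w a b A \<union> tran w a b B"
  unfolding tran_def by blast

lemma tran_tran: "tran w a b (tran w a' b' T) = tran w (a' + a) (b' + b) T"
  unfolding tran_def by (auto simp: mod_add_left_eq add.assoc) (metis add.assoc mod_add_left_eq)+

lemma good_fst: "good w k P \<Longrightarrow> fst ` P = {..<2^k}"
  unfolding good_def image_def by force

lemma good_finite: "good w k P \<Longrightarrow> finite P"
  unfolding good_def Defs.image_def
  by (rule finite_subset[of _ "{..<2^k} \<times> {..<w}"]) auto

lemma good_unique: "good w k P \<Longrightarrow> i < 2^k \<Longrightarrow> \<exists>!j. (i,j) \<in> P"
  unfolding good_def func_def by blast

lemma top_col_good: assumes "good w k P" shows "(2^k - 1, top_col P) \<in> P"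
proof -
  have M: "Max (fst ` P) = 2^k - 1" using good_fst[OF assms]
    by (intro Max_eqI) auto
  have u: "\<exists>!j. (2^k-1, j) \<in> P" using good_unique[OF assms, of "2^k-1"] by simp
  show ?thesis unfolding top_col_def M by (rule theI'[OF u])
qed

lemma bot_col_good: assumes "good w k P" shows "(0, bot_col P) \<in> P"
proof -
  have M: "Min (fst ` P) = 0" using good_fst[OF assms]
    by (intro Min_eqI) auto
  have u: "\<exists>!j. (0, j) \<in> P" using good_unique[OF assms, of 0] by simp
  show ?thesis unfolding bot_col_def M by (rule theI'[OF u])
qed

lemma good_col: "good w k P \<Longrightarrow> (i,j) \<in> P \<Longrightarrow> j < w \<and> i < 2^k"
  unfolding good_def Defs.image_def by auto

lemma good_tran0: assumes "good w k P" "w > 0" shows "good w k (tran w 0 c P)"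
  using assms unfolding good_def func_def Defs.image_def tran_def
  by (auto; metis)+

lemma good_func: "good w k P \<Longrightarrow> (i,j) \<in> P \<Longrightarrow> (i,j') \<in> P \<Longrightarrow> j = j'"
  unfolding good_def func_def by blast

lemma top_col_tran: assumes "good w k P" "w > 0"
  shows "top_col (tran w 0 c P) = (top_col P + c) mod w"
proof -
  have g: "good w k (tran w 0 c P)" using good_tran0[OF assms] .
  have "(2^k - 1, (top_col P + c) mod w) \<in> tran w 0 c P"
    using top_col_good[OF assms(1)] unfolding tran_mem2 by force
  then show ?thesis using top_col_good[OF g] good_func[OF g] by blast
qed

lemma bot_col_tran: assumes "good w k P" "w > 0"
  shows "bot_col (tran w 0 c P) = (bot_col P + c) mod w"
proof -
  have g: "good w k (tran w 0 c P)" using good_tran0[OF assms] .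
  have "(0, (bot_col P + c) mod w) \<in> tran w 0 c P"
    using bot_col_good[OF assms(1)] unfolding tran_mem2 by force
  then show ?thesis using bot_col_good[OF g] good_func[OF g] by blast
qed

lemma Delta_tran: assumes "good w k P" "w > 0"
  shows "Delta w (tran w 0 c P) = Delta w P"
proof -
  have "(int ((top_col P + c) mod w) - int ((bot_col P + c) mod w)) mod int w
      = (int (top_col P + c) - int (bot_col P + c)) mod int w"
    by (simp add: of_nat_mod mod_diff_eq)
  also have "\<dots> = (int (top_col P) - int (bot_col P)) mod int w" by simp
  finally show ?thesis unfolding Delta_def top_col_tran[OF assms] bot_col_tran[OF assms] by simp
qed

lemma good_step: assumes "good w k T" "w > 0"
  shows "good w (Suc k) (T \<union> tran w (2^k) b T)"
proof -
  have a: "T \<subseteq> image (2^k) w" "\<forall>i<2^k. \<exists>j. (i,j)\<in>T" "func T" using assms unfolding good_def by auto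
  have s1: "T \<union> tran w (2^k) b T \<subseteq> image (2^Suc k) w"
    using a(1) assms(2) unfolding Defs.image_def tran_def by auto
  have s2: "\<exists>j. (i,j)\<in>T \<union> tran w (2^k) b T" if "i < 2^Suc k" for i
  proof (cases "i < 2^k")
    case True then show ?thesis using a(2) by blast
  next
    case False
    have "i - 2^k < 2^k" using that False by simp
    then obtain j where "(i - 2^k, j) \<in> T" using a(2) by blast
    then have "(i, (j+b) mod w) \<in> tran w (2^k) b T" unfolding tran_mem2 using False by force
    then show ?thesis by blast
  qed
  have s3: "func (T \<union> tran w (2^k) b T)"
    using a(1,3) unfolding func_def Defs.image_def tran_def by auto metis
  show ?thesis unfolding good_def using s1 s2 s3 by blast
qed

lemma level_good: "w > 0 \<Longrightarrow> P \<in> FHT_level w k \<Longrightarrow> good w k P"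
proof (induction k arbitrary: P)
  case 0
  then show ?case unfolding good_def func_def Defs.image_def by auto
next
  case (Suc k)
  then obtain T s where "P = T \<union> tran w (2^k) (Delta w T + s) T" "T \<in> FHT_level w k" by auto
  then show ?case using Suc good_step by blast
qed

lemma level_shift: "w > 0 \<Longrightarrow> P \<in> FHT_level w k \<Longrightarrow> tran w 0 c P \<in> FHT_level w k"
proof (induction k arbitrary: P c)
  case 0
  then obtain j where "P = {(0,j)}" "j < w" by auto
  then have "tran w 0 c P = {(0, (j+c) mod w)}" unfolding tran_def by auto
  then show ?case using \<open>w > 0\<close> by auto
next
  case (Suc k)
  then obtain T s where P: "P = T \<union> tran w (2^k) (Delta w T + s) T" "T \<in> FHT_level w k" "s \<in> {0,1}" by auto
  have g: "good w k T" using level_good Suc P by blast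
  have T': "tran w 0 c T \<in> FHT_level w k" using Suc P by blast
  have "tran w 0 c P = tran w 0 c T \<union> tran w (2^k) (Delta w (tran w 0 c T) + s) (tran w 0 c T)"
    unfolding P tran_Un tran_tran Delta_tran[OF g Suc.prems(1)] by (simp add: add.commute add.left_commute)
  then show ?case using T' P(3) by auto
qed

lemma modc: fixes j j' c w :: nat assumes "j < w" "j' < w" "(j + c) mod w = (j' + c) mod w" shows "j = j'"
proof -
  have k: "j \<le> j' \<Longrightarrow> (j + c) mod w = (j' + c) mod w \<Longrightarrow> j' < w \<Longrightarrow> j = j'" for j j'
  proof -
    assume a: "j \<le> j'" "(j + c) mod w = (j' + c) mod w" "j' < w"
    then have "w dvd (j' + c) - (j + c)" using mod_eq_dvd_iff_nat[of "j+c" "j'+c" w] by simp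
    then have "w dvd j' - j" by simp
    moreover have "j' - j < w" using a by simp
    ultimately have "j' - j = 0" by (metis dvd_imp_le neq0_conv not_le)
    then show "j = j'" using a by simp
  qed
  show ?thesis using k[of j j'] k[of j' j] assms by (cases "j \<le> j'") auto
qed
lemma modc1: fixes j c w :: nat assumes "2 \<le> w" shows "(j + c) mod w \<noteq> (j + Suc c) mod w"
proof
  assume "(j + c) mod w = (j + Suc c) mod w"
  then have "w dvd (j + Suc c) - (j + c)" using mod_eq_dvd_iff_nat[of "j+c" "j+Suc c" w] by simp
  then have "w dvd 1" by simp
  then show False using assms by simp
qed

lemma tran0_cancel: assumes "A \<subseteq> UNIV \<times> {..<w}" "B \<subseteq> UNIV \<times> {..<w}" "tran w 0 c A = tran w 0 c B"
  shows "A = B"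
proof -
  have *: "X \<subseteq> Y" if "X \<subseteq> UNIV \<times> {..<w}" "Y \<subseteq> UNIV \<times> {..<w}" "tran w 0 c X = tran w 0 c Y" for X Y
  proof
    fix x assume "x \<in> X"
    then obtain i j where x: "x = (i,j)" "(i,j) \<in> X" by (cases x) auto
    then have "(i, (j+c) mod w) \<in> tran w 0 c Y" using that(3) unfolding tran_mem2[symmetric] by (metis tran_mem2 add_0_right)
    then obtain j' where "(i,j') \<in> Y" "(j+c) mod w = (j'+c) mod w" unfolding tran_mem2 by auto
    moreover have "j < w" "j' < w" using x that calculation by auto
    ultimately show "x \<in> Y" using x modc by metis
  qed
  show ?thesis using *[OF assms] *[OF assms(2,1) assms(3)[symmetric]] by blast
qed

lemma tran00: "A \<subseteq> UNIV \<times> {..<w} \<Longrightarrow> tran w 0 0 A = A"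
  unfolding tran_def by force

lemma good_cols: "good w k P \<Longrightarrow> P \<subseteq> UNIV \<times> {..<w}"
  unfolding good_def Defs.image_def by auto

lemma tran_disj: assumes "good w k P" "w \<ge> 2" shows "tran w a c P \<inter> tran w a (Suc c) P = {}"
proof (rule ccontr)
  assume "tran w a c P \<inter> tran w a (Suc c) P \<noteq> {}"
  then obtain i j i' j' where "(i,j) \<in> P" "(i',j') \<in> P" "i + a = i' + a" "(j+c) mod w = (j' + Suc c) mod w"
    unfolding tran_def by (auto simp del: add_Suc_right) blast
  then have "j = j'" "(j+c) mod w = (j + Suc c) mod w" using good_func[OF assms(1)] by auto
  then show False using modc1[OF assms(2)] by blast
qed

lemma trunc_step: assumes "good w k T" shows "(T \<union> tran w (2^k) b T) \<inter> image (2^k) w = T"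
  using assms unfolding good_def Defs.image_def tran_def by auto

lemma tran_high: "tran w (2^k) b T \<inter> image (2^k) w = {}"
  unfolding Defs.image_def tran_def by auto

lemma level_Suc_eq: "FHT_level w (Suc k) = (\<lambda>(T,s). T \<union> tran w (2^k) (Delta w T + s) T) ` (FHT_level w k \<times> {0,1})"
  by (auto simp: image_def)

lemma level_finite: "finite (FHT_level w k)"
proof (induction k)
  case 0
  have "FHT_level w 0 = (\<lambda>j. {(0,j)}) ` {..<w}" by auto
  then show ?case by simp
next
  case (Suc k) then show ?case unfolding level_Suc_eq by simp
qed

lemma level_card: assumes "w \<ge> 2" shows "card (FHT_level w k) = w * 2^k"
proof (induction k)
  case 0
  have "FHT_level w 0 = (\<lambda>j. {(0,j)}) ` {..<w}" by auto
  moreover have "inj_on (\<lambda>j. {(0::nat,j)}) {..<w}" by (auto simp: inj_on_def)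
  ultimately show ?case by (simp add: card_image)
next
  case (Suc k)
  have w0: "w > 0" using assms by simp
  have inj: "inj_on (\<lambda>(T,s). T \<union> tran w (2^k) (Delta w T + s) T) (FHT_level w k \<times> {0,1})"
  proof (rule inj_onI, clarify)
    fix T s T' s'
    assume T: "T \<in> FHT_level w k" "s \<in> {0::nat,1}" and T': "T' \<in> FHT_level w k" "s' \<in> {0::nat,1}"
      and eq: "T \<union> tran w (2^k) (Delta w T + s) T = T' \<union> tran w (2^k) (Delta w T' + s') T'"
    have g: "good w k T" "good w k T'" using level_good[OF w0] T T' by auto
    have "T = T'" using trunc_step[OF g(1)] trunc_step[OF g(2)] eq by metis
    moreover
    have "tran w (2^k) (Delta w T + s) T = tran w (2^k) (Delta w T + s') T"
    proof -
      have "tran w (2^k) (Delta w T + s) T = (T \<union> tran w (2^k) (Delta w T + s) T) - image (2^k) w"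
        using tran_high[of w k _ T] g(1) unfolding good_def by blast
      also have "\<dots> = tran w (2^k) (Delta w T + s') T"
        using eq \<open>T = T'\<close> tran_high[of w k _ T] g(1) unfolding good_def by blast
      finally show ?thesis .
    qed
    moreover have "tran w (2^k) (Delta w T + s) T \<noteq> {}" using bot_col_good[OF g(1)] unfolding tran_def by blast
    ultimately have "s = s'" using T(2) T'(2) tran_disj[OF g(1) assms, of "2^k" "Delta w T"]
      by auto
    then show "T = T' \<and> s = s'" using \<open>T = T'\<close> by simp
  qed
  have "card (FHT_level w (Suc k)) = card (FHT_level w k \<times> {0::nat,1})"
    unfolding level_Suc_eq by (rule card_image[OF inj])
  also have "\<dots> = 2 * card (FHT_level w k)" by (simp add: card_cartesian_product)
  finally show ?case using Suc by simp
qed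

lemma image_mono2: "a \<le> b \<Longrightarrow> image a w \<subseteq> image b w"
  unfolding Defs.image_def by auto

lemma level_trunc: "w > 0 \<Longrightarrow> k \<le> D \<Longrightarrow> Q \<in> FHT_level w D \<Longrightarrow> Q \<inter> image (2^k) w \<in> FHT_level w k"
proof (induction D arbitrary: Q)
  case 0
  then have "Q \<subseteq> image (2^k) w" using level_good[of w Q 0] unfolding good_def by auto
  then show ?case using 0 by (simp add: Int_absorb2)
next
  case (Suc D)
  show ?case
  proof (cases "k = Suc D")
    case True
    then have "Q \<subseteq> image (2^k) w" using level_good[of w Q "Suc D"] Suc unfolding good_def by auto
    then show ?thesis using Suc True by (simp add: Int_absorb2)
  next
    case False
    then have kD: "k \<le> D" using Suc by simp
    obtain T s where Q: "Q = T \<union> tran w (2^D) (Delta w T + s) T" "T \<in> FHT_level w D" "s \<in> {0,1}"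
      using Suc by auto
    have g: "good w D T" using level_good Suc Q by blast
    have "Q \<inter> image (2^k) w = (Q \<inter> image (2^D) w) \<inter> image (2^k) w"
      using image_mono2[of "2^k" "2^D" w] kD by (auto simp: power_increasing)
    also have "\<dots> = T \<inter> image (2^k) w" using trunc_step[OF g] Q by simp
    finally show ?thesis using Suc.IH[OF Suc.prems(1) kD Q(2)] by simp
  qed
qed

lemma level_ext: "w > 0 \<Longrightarrow> k \<le> D \<Longrightarrow> P \<in> FHT_level w k \<Longrightarrow> \<exists>Q\<in>FHT_level w D. Q \<inter> image (2^k) w = P"
proof (induction D)
  case 0
  then have "P \<subseteq> image (2^k) w" using level_good[of w P k] unfolding good_def by auto
  then show ?case using 0 by (intro bexI[of _ P]) auto
next
  case (Suc D)
  show ?case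
  proof (cases "k = Suc D")
    case True
    then have "P \<subseteq> image (2^k) w" using level_good[of w P k] Suc unfolding good_def by auto
    then show ?thesis using Suc True by (intro bexI[of _ P]) auto
  next
    case False
    then have kD: "k \<le> D" using Suc by simp
    obtain T where T: "T \<in> FHT_level w D" "T \<inter> image (2^k) w = P" using Suc kD by blast
    define Q where "Q = T \<union> tran w (2^D) (Delta w T + 0) T"
    have Q: "Q \<in> FHT_level w (Suc D)" unfolding Q_def level_Suc_eq using T by (intro image_eqI[of _ _ "(T,0)"]) auto
    have g: "good w D T" using level_good Suc T by blast
    have "Q \<inter> image (2^k) w = (Q \<inter> image (2^D) w) \<inter> image (2^k) w"
      using image_mono2[of "2^k" "2^D" w] kD by (auto simp: power_increasing)
    also have "\<dots> = T \<inter> image (2^k) w" using trunc_step[OF g] Q_def by simp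
    finally show ?thesis using Q T by blast
  qed
qed

lemma shift_cross: assumes "good w k T1" "good w k T2" "w \<ge> 2"
  "tran w 0 d T1 = tran w 0 (Suc d) T2" shows "T1 \<inter> T2 = {}"
proof -
  have w0: "w > 0" using assms by simp
  have "tran w 0 d T1 = tran w 0 d (tran w 0 1 T2)" using assms(4) by (simp add: tran_tran)
  moreover have "tran w 0 1 T2 \<subseteq> UNIV \<times> {..<w}" using w0 unfolding tran_def by auto
  ultimately have "T1 = tran w 0 1 T2" using tran0_cancel good_cols[OF assms(1)] by blast
  moreover have "T2 = tran w 0 0 T2" using tran00[OF good_cols[OF assms(2)]] by simp
  ultimately show ?thesis using tran_disj[OF assms(2,3), of 0 0] by (metis One_nat_def Int_commute)
qed

lemma rect: assumes w2: "w \<ge> 2" shows "card {P\<in>FHT_level w k. X \<subseteq> P} * card X \<le> 2^k"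
proof (induction k arbitrary: X)
  case 0
  show ?case
  proof (cases "{P\<in>FHT_level w 0. X \<subseteq> P} = {}")
    case True then show ?thesis unfolding True by simp
  next
    case False
    then obtain j0 where j0: "X \<subseteq> {(0,j0)}" by auto
    show ?thesis
    proof (cases "X = {}")
      case True then show ?thesis by simp
    next
      case False
      then have X: "X = {(0,j0)}" using j0 by auto
      have "{P\<in>FHT_level w 0. X \<subseteq> P} \<subseteq> {{(0,j0)}}" using X by auto
      then have "card {P\<in>FHT_level w 0. X \<subseteq> P} \<le> 1" by (metis card.empty card.insert empty_iff finite.intros(1) le_numeral_extra(4) subset_singletonD one_le_numeral card_mono finite.insertI is_singletonI is_singleton_altdef)
      then show ?thesis using X by simp
    qed
  qed
next
  case (Suc k)
  have w0: "w > 0" using w2 by simp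
  show ?case
  proof (cases "finite X")
    case False then show ?thesis by simp
  next
    case finX: True
    define F where "F = (\<lambda>(T,s). T \<union> tran w (2^k) (Delta w T + s) T)"
    define G where "G = (\<lambda>(T,s). tran w 0 (Delta w T + s) T)"
    define L where "L = FHT_level w k"
    define B where "B = {Ts \<in> L \<times> {0::nat,1}. X \<subseteq> F Ts}"
    define Xb where "Xb = {x\<in>X. fst x < 2^k}"
    define Xt where "Xt = {x\<in>X. \<not> fst x < 2^k}"
    define Y where "Y = (\<lambda>(i,j). (i - 2^k, j::nat)) ` Xt"
    have finL: "finite L" unfolding L_def by (rule level_finite)
    have finB: "finite B" unfolding B_def using finL by simp
    have A: "{P\<in>FHT_level w (Suc k). X \<subseteq> P} = F ` B"
      unfolding level_Suc_eq F_def B_def L_def by auto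
    have cardA: "card {P\<in>FHT_level w (Suc k). X \<subseteq> P} \<le> card B" unfolding A by (rule card_image_le[OF finB])
    have cX: "card X = card Xb + card Xt"
      unfolding Xb_def Xt_def using finX by (subst card_Un_disjoint[symmetric]) (auto intro: arg_cong[where f=card])
    have cY: "card Y = card Xt" unfolding Y_def
      by (rule card_image) (auto simp: inj_on_def Xt_def)
    have finY: "finite Y" unfolding Y_def Xt_def using finX by simp
    have finXb: "finite Xb" unfolding Xb_def using finX by simp
    have key: "X \<subseteq> F (T,s) \<longleftrightarrow> Xb \<subseteq> T \<and> Y \<subseteq> G (T,s)" if T: "T \<in> L" for T s
    proof -
      have g: "good w k T" using level_good[OF w0] T unfolding L_def by blast
      have rows: "\<And>i j. (i,j) \<in> T \<Longrightarrow> i < 2^k" using g unfolding good_def Defs.image_def by auto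
      show ?thesis
      proof
        assume a: "X \<subseteq> F (T,s)"
        have "Xb \<subseteq> T"
        proof
          fix x assume "x \<in> Xb"
          then have "x \<in> F (T,s)" "fst x < 2^k" using a unfolding Xb_def by auto
          then show "x \<in> T" unfolding F_def tran_def by auto
        qed
        moreover have "Y \<subseteq> G (T,s)"
        proof
          fix y assume "y \<in> Y"
          then obtain i j where ij: "(i,j) \<in> Xt" "y = (i - 2^k, j)" unfolding Y_def by auto
          then have "(i,j) \<in> F (T,s)" "\<not> i < 2^k" using a unfolding Xt_def by auto
          then have "(i,j) \<in> tran w (2^k) (Delta w T + s) T" unfolding F_def using rows by auto
          then obtain i0 j0 where "i = i0 + 2^k" "j = (j0 + (Delta w T + s)) mod w" "(i0,j0) \<in> T"
            unfolding tran_mem2 by auto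
          then show "y \<in> G (T,s)" unfolding G_def using ij by (auto simp: tran_mem2)
        qed
        ultimately show "Xb \<subseteq> T \<and> Y \<subseteq> G (T,s)" by blast
      next
        assume a: "Xb \<subseteq> T \<and> Y \<subseteq> G (T,s)"
        show "X \<subseteq> F (T,s)"
        proof
          fix x assume x: "x \<in> X"
          obtain i j where xij: "x = (i,j)" by (cases x)
          show "x \<in> F (T,s)"
          proof (cases "i < 2^k")
            case True then show ?thesis using a x xij unfolding Xb_def F_def by auto
          next
            case False
            then have "(i - 2^k, j) \<in> Y" unfolding Y_def Xt_def using x xij by force
            then have "(i - 2^k, j) \<in> tran w 0 (Delta w T + s) T" using a unfolding G_def by auto
            then obtain i0 j0 where o: "i - 2^k = i0" "j = (j0 + (Delta w T + s)) mod w" "(i0,j0) \<in> T"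
              unfolding tran_mem2 by auto
            have "i = i0 + 2^k" using False o(1) by simp
            then have "(i,j) \<in> tran w (2^k) (Delta w T + s) T" unfolding tran_mem2 using o by blast
            then show ?thesis unfolding F_def xij by auto
          qed
        qed
      qed
    qed
    have GL: "G (T,s) \<in> L" if "T \<in> L" for T s using level_shift[OF w0] that unfolding G_def L_def by auto
    have DG: "Delta w (G (T,s)) = Delta w T" if "T \<in> L" for T s
      using Delta_tran[OF level_good[OF w0] w0] that unfolding G_def L_def by auto
    define a where "a = card {T\<in>L. Xb \<subseteq> T}"
    define b where "b = card {Q\<in>L. Y \<subseteq> Q}"
    have IHa: "a * card Xb \<le> 2^k" unfolding a_def L_def by (rule Suc.IH)
    have IHb: "b * card Y \<le> 2^k" unfolding b_def L_def by (rule Suc.IH)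
    have b1: "card B \<le> 2 * a"
    proof -
      have "B \<subseteq> {T\<in>L. Xb \<subseteq> T} \<times> {0::nat,1}" unfolding B_def using key by auto
      then have "card B \<le> card ({T\<in>L. Xb \<subseteq> T} \<times> {0::nat,1})" using finL by (intro card_mono) auto
      then show ?thesis unfolding a_def by (simp add: card_cartesian_product)
    qed
    have b2: "card B \<le> 2 * b"
    proof -
      define g where "g = (\<lambda>(T,s). (G (T,s), s::nat))"
      have inj: "inj_on g B"
      proof (rule inj_onI, clarify)
        fix T s T' s' assume in1: "(T,s) \<in> B" "(T',s') \<in> B" and e: "g (T,s) = g (T',s')"
        then have ss: "s = s'" and GG: "G (T,s) = G (T',s)" unfolding g_def by auto
        have TL: "T \<in> L" "T' \<in> L" using in1 unfolding B_def by auto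
        have dd: "Delta w T = Delta w T'" using DG[OF TL(1), of s] DG[OF TL(2), of s] GG by simp
        have gg: "good w k T" "good w k T'" using level_good[OF w0] TL unfolding L_def by auto
        have "tran w 0 (Delta w T + s) T = tran w 0 (Delta w T + s) T'" using GG dd unfolding G_def by simp
        then have "T = T'" by (rule tran0_cancel[OF good_cols[OF gg(1)] good_cols[OF gg(2)]])
        then show "T = T' \<and> s = s'" using ss by simp
      qed
      have "g ` B \<subseteq> {Q\<in>L. Y \<subseteq> Q} \<times> {0::nat,1}" unfolding g_def B_def using key GL by auto
      then have "card (g ` B) \<le> card ({Q\<in>L. Y \<subseteq> Q} \<times> {0::nat,1})" using finL by (intro card_mono) auto
      then show ?thesis unfolding b_def using card_image[OF inj] by (simp add: card_cartesian_product)
    qed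
    have b3: "card B \<le> a" if Yne: "Y \<noteq> {}"
    proof -
      have inj: "inj_on fst B"
      proof (rule inj_onI, clarify)
        fix T s T' s' assume in1: "(T,s) \<in> B" "(T',s') \<in> B" and e: "fst (T,s) = fst (T',s')"
        then have TT: "T = T'" by simp
        have TL: "T \<in> L" and s: "s \<in> {0,1}" "s' \<in> {0,1}" using in1 unfolding B_def by auto
        have g: "good w k T" using level_good[OF w0] TL unfolding L_def by blast
        have Ys: "Y \<subseteq> G (T,s)" "Y \<subseteq> G (T,s')" using in1 key TL TT unfolding B_def by auto
        show "T = T' \<and> s = s'"
        proof (rule ccontr)
          assume "\<not> (T = T' \<and> s = s')"
          then have "s \<noteq> s'" using TT by simp
          then have "G (T,s) \<inter> G (T,s') = {}" using tran_disj[OF g w2, of 0 "Delta w T"] s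
            unfolding G_def by (auto simp: Int_commute)
          then show False using Ys Yne by blast
        qed
      qed
      have "fst ` B \<subseteq> {T\<in>L. Xb \<subseteq> T}" unfolding B_def using key by auto
      then have "card (fst ` B) \<le> a" unfolding a_def using finL by (intro card_mono) auto
      then show ?thesis using card_image[OF inj] by simp
    qed
    have b4: "card B \<le> b" if Xne: "Xb \<noteq> {}"
    proof -
      have inj: "inj_on G B"
      proof (rule inj_onI, clarify)
        fix T s T' s' assume in1: "(T,s) \<in> B" "(T',s') \<in> B" and e: "G (T,s) = G (T',s')"
        have TL: "T \<in> L" "T' \<in> L" and s: "s \<in> {0,1}" "s' \<in> {0,1}" using in1 unfolding B_def by auto
        have g: "good w k T" "good w k T'" using level_good[OF w0] TL unfolding L_def by auto
        have Xs: "Xb \<subseteq> T" "Xb \<subseteq> T'" using in1 key TL unfolding B_def by auto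
        have dd: "Delta w T = Delta w T'" using DG[OF TL(1), of s] DG[OF TL(2), of s'] e by simp
        show "T = T' \<and> s = s'"
        proof (cases "s = s'")
          case True
          then have "tran w 0 (Delta w T + s) T = tran w 0 (Delta w T + s) T'" using e dd unfolding G_def by simp
          then have "T = T'" by (rule tran0_cancel[OF good_cols[OF g(1)] good_cols[OF g(2)]])
          then show ?thesis using True by simp
        next
          case False
          then have "(s = 0 \<and> s' = 1) \<or> (s = 1 \<and> s' = 0)" using s by auto
          then have "T \<inter> T' = {}"
          proof
            assume "s = 0 \<and> s' = 1"
            then have "tran w 0 (Delta w T) T = tran w 0 (Suc (Delta w T)) T'" using e dd unfolding G_def by simp
            then show ?thesis using shift_cross[OF g w2] by blast
          next
            assume "s = 1 \<and> s' = 0"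
            then have "tran w 0 (Delta w T) T' = tran w 0 (Suc (Delta w T)) T" using e dd unfolding G_def by simp
            then show ?thesis using shift_cross[OF g(2,1) w2] by blast
          qed
          then show ?thesis using Xs Xne by blast
        qed
      qed
      have "G ` B \<subseteq> {Q\<in>L. Y \<subseteq> Q}" unfolding B_def using key GL by auto
      then have "card (G ` B) \<le> b" unfolding b_def using finL by (intro card_mono) auto
      then show ?thesis using card_image[OF inj] by simp
    qed
    have "card B * card X \<le> 2 ^ Suc k"
    proof (cases "Y = {}")
      case True
      then have "card X = card Xb" using cX cY finY by simp
      then show ?thesis using b1 IHa by (simp add: mult_le_mono1 order_trans[OF mult_le_mono1[OF b1]])
    next
      case Yne: False
      show ?thesis
      proof (cases "Xb = {}")
        case True
        then have "card X = card Y" using cX cY by simp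
        then show ?thesis using b2 IHb by (simp add: order_trans[OF mult_le_mono1[OF b2]])
      next
        case False
        have "card B * card X = card B * card Xb + card B * card Y" using cX cY by (simp add: algebra_simps)
        also have "\<dots> \<le> a * card Xb + b * card Y" using b3[OF Yne] b4[OF False] by (intro add_mono mult_le_mono1)
        also have "\<dots> \<le> 2^k + 2^k" using IHa IHb by simp
        finally show ?thesis by simp
      qed
    qed
    then show ?thesis using cardA by (meson le_trans mult_le_mono1)
  qed
qed



lemma cube_le_pow3: "(k::nat)^3 \<le> 3^k"
proof (induction k rule: less_induct)
  case (less k)
  show ?case
  proof (cases "k \<le> 3")
    case True
    then have "k \<in> {0,1,2,3}" by auto
    then show ?thesis by auto
  next
    case False
    then obtain m where m: "k = Suc m" "m \<ge> 3" by (cases k) auto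
    have IH: "m^3 \<le> 3^m" using less m by simp
    have "(Suc m)^3 \<le> 3 * m^3"
    proof -
      have "(Suc m)^3 = m^3 + 3*m^2 + 3*m + 1" by (simp add: power3_eq_cube power2_eq_square algebra_simps)
      moreover have "3*m^2 \<le> m^3" using m(2) by (simp add: power3_eq_cube power2_eq_square)
      moreover have "3*m + 1 \<le> m^3"
      proof -
        have "9 * m \<le> m^3" using m(2) mult_le_mono[OF m(2) m(2)] by (simp add: power3_eq_cube mult.assoc)
        then show ?thesis using m(2) by linarith
      qed
      ultimately show ?thesis by linarith
    qed
    then show ?thesis using IH m by simp
  qed
qed

lemma k_le_powr: "real k \<le> 3 powr (real k / 3)"
proof -
  have "real k ^ 3 \<le> 3 ^ k" using cube_le_pow3[of k] by (metis of_nat_le_iff of_nat_numeral of_nat_power)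
  also have "(3::real) ^ k = (3 powr (real k / 3)) ^ 3"
    by (simp add: powr_realpow[symmetric] powr_powr)
  finally have "real k ^ Suc 2 \<le> (3 powr (real k / 3)) ^ Suc 2" by (simp add: numeral_3_eq_3)
  then show ?thesis by (rule power_le_imp_le_base) simp
qed

lemma kpowr: assumes "k \<ge> 1" shows "3 powr (- real k / 3) * real k \<le> 1"
proof -
  have "3 powr (- real k / 3) * 3 powr (real k / 3) = 1" by (simp add: powr_add[symmetric])
  moreover have "0 \<le> 3 powr (- real k / 3)" by simp
  ultimately show ?thesis using k_le_powr[of k] by (metis mult_left_mono)
qed

lemma jensen3: assumes fin: "finite A" and ne: "A \<noteq> {}" and s: "(\<Sum>p\<in>A. 3 powr (- c p / 3)) \<le> 1"
  shows "3 * real (card A) * log 3 (real (card A)) \<le> (\<Sum>p\<in>A. c p)"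
proof -
  define m where "m = real (card A)"
  have m0: "m > 0" unfolding m_def using fin ne by (simp add: card_gt_0_iff)
  define a where "a = (\<Sum>p\<in>A. c p) / m"
  define l where "l = ln 3 / (3::real)"
  have l0: "l > 0" unfolding l_def by simp
  have pw: "3 powr (- x / 3) = exp (- x * l)" for x unfolding powr_def l_def by simp
  have each: "exp (- a * l) * (1 + (a - c p) * l) \<le> 3 powr (- c p / 3)" for p
  proof -
    have "exp (- a * l) * (1 + (a - c p) * l) \<le> exp (- a * l) * exp ((a - c p) * l)"
      by (intro mult_left_mono) (auto simp: exp_ge_add_one_self)
    also have "\<dots> = exp (- c p * l)" by (simp add: exp_add[symmetric] algebra_simps)
    finally show ?thesis unfolding pw .
  qed
  have "(\<Sum>p\<in>A. exp (- a * l) * (1 + (a - c p) * l)) = exp (- a * l) * (m + (m * a - (\<Sum>p\<in>A. c p)) * l)"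
    by (simp add: sum_distrib_left[symmetric] sum.distrib sum_subtractf m_def algebra_simps sum_distrib_right[symmetric])
  also have "m * a = (\<Sum>p\<in>A. c p)" unfolding a_def using m0 by simp
  finally have "exp (- a * l) * m \<le> 1"
    using sum_mono[of A "\<lambda>p. exp (- a * l) * (1 + (a - c p) * l)" "\<lambda>p. 3 powr (- c p / 3)"] each s by simp
  then have "ln (exp (- a * l) * m) \<le> 0" using m0 by (simp add: ln_le_zero_iff)
  then have "- a * l + ln m \<le> 0" using m0 by (simp add: ln_mult)
  then have "ln m / l \<le> a" using l0 by (simp add: field_simps)
  then have "3 * log 3 m \<le> a" unfolding l_def log_def by (simp add: field_simps)
  then have "m * (3 * log 3 m) \<le> m * a" using m0 by simp
  then show ?thesis unfolding a_def m_def using m0 m_def by (simp add: algebra_simps)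
qed



definition Sset :: "nat \<Rightarrow> nat \<Rightarrow> circuit \<Rightarrow> nat \<Rightarrow> pixel set" where
  "Sset h w C v = {p \<in> image h w. (inp C p, v) \<in> (edges C)\<^sup>*}"

definition cone :: "circuit \<Rightarrow> nat \<Rightarrow> nat set" where
  "cone C v = {u \<in> nodes C. (u, v) \<in> (edges C)\<^sup>*}"

definition fanin :: "circuit \<Rightarrow> nat \<Rightarrow> nat" where
  "fanin C v = card {u. (u, v) \<in> edges C}"

lemma ic_fin: "is_circuit h w T C \<Longrightarrow> finite (nodes C)" unfolding is_circuit_def by (elim conjE)
lemma ic_EV: "is_circuit h w T C \<Longrightarrow> edges C \<subseteq> nodes C \<times> nodes C" unfolding is_circuit_def by (elim conjE)
lemma ic_acyc: "is_circuit h w T C \<Longrightarrow> acyclic (edges C)" unfolding is_circuit_def by (elim conjE)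
lemma ic_inj: "is_circuit h w T C \<Longrightarrow> inj_on (inp C) (image h w)" unfolding is_circuit_def by (elim conjE)
lemma ic_inpV: "is_circuit h w T C \<Longrightarrow> p \<in> image h w \<Longrightarrow> inp C p \<in> nodes C" unfolding is_circuit_def by (elim conjE) blast
lemma ic_noin: "is_circuit h w T C \<Longrightarrow> p \<in> image h w \<Longrightarrow> (u, inp C p) \<notin> edges C" unfolding is_circuit_def by (elim conjE) blast
lemma ic_src: "is_circuit h w T C \<Longrightarrow> v \<in> nodes C \<Longrightarrow> \<forall>u. (u, v) \<notin> edges C \<Longrightarrow> \<exists>p\<in>image h w. v = inp C p" unfolding is_circuit_def by (elim conjE) blast
lemma ic_outinj: "is_circuit h w T C \<Longrightarrow> inj_on (out C) T" unfolding is_circuit_def by (elim conjE)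
lemma ic_outV: "is_circuit h w T C \<Longrightarrow> X \<in> T \<Longrightarrow> out C X \<in> nodes C" unfolding is_circuit_def by (elim conjE) blast

lemma inp_rtrancl: assumes "is_circuit h w \<T> C" "p \<in> image h w" "(a, inp C p) \<in> (edges C)\<^sup>*"
  shows "a = inp C p"
  using assms(3) by (rule rtranclE) (use ic_noin[OF assms(1,2)] in auto)

lemma sem: assumes oc: "or_computes h w \<T> C" and T: "T \<in> \<T>" "T \<subseteq> image h w"
  shows "Sset h w C (out C T) = T"
proof -
  have ic: "is_circuit h w \<T> C" using oc unfolding or_computes_def by simp
  have injI: "inj_on (inp C) (image h w)" using ic unfolding is_circuit_def by simp
  have "p \<in> Sset h w C (out C T) \<longleftrightarrow> p \<in> T" if p: "p \<in> image h w" for p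
  proof -
    define x where "x = (\<lambda>q::pixel. q = p)"
    define val where "val = (\<lambda>v. \<exists>q\<in>image h w. x q \<and> (inp C q, v) \<in> (edges C)\<^sup>*)"
    have ev: "or_eval h w C x val" unfolding or_eval_def
    proof (intro conjI ballI impI)
      fix q assume q: "q \<in> image h w"
      have "(inp C q', inp C q) \<in> (edges C)\<^sup>* \<longleftrightarrow> q' = q" if "q' \<in> image h w" for q'
        using inp_rtrancl[OF ic q] injI q that unfolding inj_on_def by blast
      then show "val (inp C q) = x q" unfolding val_def x_def using q p by auto
    next
      fix v assume v: "v \<in> nodes C" and ex: "\<exists>u. (u, v) \<in> edges C"
      show "val v = (\<exists>u. (u, v) \<in> edges C \<and> val u)"
      proof
        assume "val v"
        then obtain q where q: "q \<in> image h w" "x q" "(inp C q, v) \<in> (edges C)\<^sup>*" unfolding val_def by auto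
        have "inp C q \<noteq> v" using ic q(1) ex unfolding is_circuit_def by auto
        then obtain u where "(inp C q, u) \<in> (edges C)\<^sup>*" "(u, v) \<in> edges C"
          using q(3) by (metis rtranclE)
        then show "\<exists>u. (u, v) \<in> edges C \<and> val u" unfolding val_def using q by blast
      next
        assume "\<exists>u. (u, v) \<in> edges C \<and> val u"
        then show "val v" unfolding val_def by (meson rtrancl_into_rtrancl)
      qed
    qed
    have "val (out C T) = (\<exists>q\<in>T. x q)" using oc ev T(1) unfolding or_computes_def by blast
    moreover have "val (out C T) = ((inp C p, out C T) \<in> (edges C)\<^sup>*)" unfolding val_def x_def using p by auto
    ultimately show ?thesis unfolding Sset_def x_def using p by auto
  qed
  moreover have "Sset h w C (out C T) \<subseteq> image h w" unfolding Sset_def by auto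
  ultimately show ?thesis using T(2) by blast
qed

lemma Sset_mono: "(u, v) \<in> (edges C)\<^sup>* \<Longrightarrow> Sset h w C u \<subseteq> Sset h w C v"
  unfolding Sset_def by auto

lemma Sset_out: assumes "or_computes h w \<T> C" "T \<in> \<T>" "T \<subseteq> image h w" "(u, out C T) \<in> (edges C)\<^sup>*"
  shows "Sset h w C u \<subseteq> T"
  using Sset_mono[OF assms(4), of h w] sem[OF assms(1-3)] by simp

lemma cost: assumes ic: "is_circuit h w \<T> C"
  shows "v \<in> nodes C \<Longrightarrow> \<exists>c::pixel\<Rightarrow>real. (\<Sum>p\<in>Sset h w C v \<inter> Bt. 3 powr (- c p / 3)) \<le> 1 \<and>
     (\<forall>p\<in>Sset h w C v \<inter> Bt. c p \<le> real (\<Sum>u\<in>{u\<in>cone C v. p \<in> Sset h w C u}. fanin C u))"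
proof -
  let ?E = "edges C"
  have finV: "finite (nodes C)" and EV: "?E \<subseteq> nodes C \<times> nodes C" and acyc: "acyclic ?E"
    using ic_fin[OF ic] ic_EV[OF ic] ic_acyc[OF ic] by auto
  have finE: "finite ?E" using finite_subset[OF EV] finV by auto
  have wf: "wf ?E" using finite_acyclic_wf[OF finE acyc] .
  have finS: "finite (Sset h w C x \<inter> Bt)" for x
    unfolding Sset_def Defs.image_def by (rule finite_subset[of _ "{..<h} \<times> {..<w}"]) auto
  show "v \<in> nodes C \<Longrightarrow> ?thesis"
  proof (induction v rule: wf_induct_rule[OF wf])
    case (1 v)
    show ?case
    proof (cases "\<exists>u. (u, v) \<in> ?E")
      case False
      then obtain p0 where p0: "p0 \<in> image h w" "v = inp C p0" using ic_src[OF ic 1(2)] by blast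
      have "Sset h w C v \<subseteq> {p0}"
      proof
        fix p assume "p \<in> Sset h w C v"
        then have "p \<in> image h w" "(inp C p, inp C p0) \<in> ?E\<^sup>*" unfolding Sset_def p0 by auto
        then show "p \<in> {p0}" using inp_rtrancl[OF ic p0(1)] ic_inj[OF ic] p0(1) unfolding inj_on_def by auto
      qed
      then have "Sset h w C v \<inter> Bt \<subseteq> {p0}" by blast
      then have "card (Sset h w C v \<inter> Bt) \<le> card {p0}" by (rule card_mono[rotated]) simp
      then have "card (Sset h w C v \<inter> Bt) \<le> 1" by simp
      then show ?thesis by (intro exI[of _ "\<lambda>_. 0"]) (simp add: sum_nonneg)
    next
      case True
      define U where "U = {u. (u, v) \<in> ?E}"
      have UV: "U \<subseteq> nodes C" unfolding U_def using EV by auto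
      have finU: "finite U" using finite_subset[OF UV finV] .
      define k where "k = card U"
      have "U \<noteq> {}" using True unfolding U_def by auto
      then have k1: "k \<ge> 1" unfolding k_def using finU by (simp add: Suc_le_eq card_gt_0_iff)
      have fk: "fanin C v = k" unfolding fanin_def k_def U_def by simp
      have "\<forall>u\<in>U. \<exists>c::pixel\<Rightarrow>real. (\<Sum>p\<in>Sset h w C u \<inter> Bt. 3 powr (- c p / 3)) \<le> 1 \<and>
         (\<forall>p\<in>Sset h w C u \<inter> Bt. c p \<le> real (\<Sum>x\<in>{x\<in>cone C u. p \<in> Sset h w C x}. fanin C x))"
        using 1(1) UV unfolding U_def by blast
      from bchoice[OF this] obtain cc where cc0: "\<forall>u\<in>U. (\<Sum>p\<in>Sset h w C u \<inter> Bt. 3 powr (- cc u p / 3)) \<le> 1 \<and>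
         (\<forall>p\<in>Sset h w C u \<inter> Bt. cc u p \<le> real (\<Sum>x\<in>{x\<in>cone C u. p \<in> Sset h w C x}. fanin C x))"
        by blast
      have cc: "\<And>u. u \<in> U \<Longrightarrow> (\<Sum>p\<in>Sset h w C u \<inter> Bt. 3 powr (- cc u p / 3)) \<le> 1 \<and>
         (\<forall>p\<in>Sset h w C u \<inter> Bt. cc u p \<le> real (\<Sum>x\<in>{x\<in>cone C u. p \<in> Sset h w C x}. fanin C x))"
        using cc0 by blast
      have exu: "\<exists>u\<in>U. p \<in> Sset h w C u" if p: "p \<in> Sset h w C v" for p
      proof -
        have pI: "p \<in> image h w" and r: "(inp C p, v) \<in> ?E\<^sup>*" using p unfolding Sset_def by auto
        have "inp C p \<noteq> v" using ic_noin[OF ic pI] True by auto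
        then obtain u where "(inp C p, u) \<in> ?E\<^sup>*" "(u, v) \<in> ?E" using r by (metis rtranclE)
        then show ?thesis unfolding U_def Sset_def using pI by auto
      qed
      define up where "up p = (SOME u. u \<in> U \<and> p \<in> Sset h w C u)" for p
      have up: "up p \<in> U \<and> p \<in> Sset h w C (up p)" if "p \<in> Sset h w C v" for p
        using someI_ex[of "\<lambda>u. u \<in> U \<and> p \<in> Sset h w C u"] exu[OF that] unfolding up_def by blast
      have subS: "Sset h w C u \<subseteq> Sset h w C v" if "u \<in> U" for u
        using Sset_mono[of u v C h w] that unfolding U_def by auto
      define c where "c p = real k + cc (up p) p" for p
      let ?S = "Sset h w C v \<inter> Bt"
      define f where "f u p = (3::real) powr (- cc u p / 3)" for u p
      have p1: "(\<Sum>p\<in>?S. 3 powr (- c p / 3)) \<le> 1"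
      proof -
        have "(\<Sum>p\<in>?S. 3 powr (- c p / 3)) = (\<Sum>p\<in>?S. 3 powr (- real k / 3) * f (up p) p)"
          unfolding c_def f_def by (intro sum.cong refl) (simp add: powr_add[symmetric] diff_divide_distrib add_divide_distrib)
        also have "\<dots> = 3 powr (- real k / 3) * (\<Sum>p\<in>?S. f (up p) p)" by (simp add: sum_distrib_left)
        also have "(\<Sum>p\<in>?S. f (up p) p) \<le> (\<Sum>p\<in>?S. \<Sum>u\<in>{u\<in>U. p \<in> Sset h w C u}. f u p)"
        proof (intro sum_mono)
          fix p assume "p \<in> ?S"
          then have "up p \<in> {u\<in>U. p \<in> Sset h w C u}" using up by auto
          then show "f (up p) p \<le> (\<Sum>u\<in>{u\<in>U. p \<in> Sset h w C u}. f u p)"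
            using finU by (intro member_le_sum) (auto simp: f_def)
        qed
        also have "(\<Sum>p\<in>?S. \<Sum>u\<in>{u\<in>U. p \<in> Sset h w C u}. f u p) = (\<Sum>u\<in>U. \<Sum>p\<in>{p\<in>?S. p \<in> Sset h w C u}. f u p)"
          by (rule sum.swap_restrict[OF finS finU])
        also have "\<dots> = (\<Sum>u\<in>U. \<Sum>p\<in>Sset h w C u \<inter> Bt. f u p)"
          by (intro sum.cong refl) (use subS in auto)
        also have "\<dots> \<le> (\<Sum>u\<in>U. 1)" using cc unfolding f_def by (intro sum_mono) auto
        also have "\<dots> = real k" unfolding k_def by simp
        finally show ?thesis using kpowr[OF k1] by (smt (verit) mult_left_mono powr_ge_zero)
      qed
      have p2: "c p \<le> real (\<Sum>u\<in>{u\<in>cone C v. p \<in> Sset h w C u}. fanin C u)" if p: "p \<in> ?S" for p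
      proof -
        define u where "u = up p"
        have u: "u \<in> U" "p \<in> Sset h w C u" using up p unfolding u_def by auto
        have uv: "(u, v) \<in> ?E" using u unfolding U_def by simp
        have ccu: "cc u p \<le> real (\<Sum>x\<in>{x\<in>cone C u. p \<in> Sset h w C x}. fanin C x)" using cc[OF u(1)] u p by auto
        have vn: "v \<notin> cone C u"
        proof
          assume "v \<in> cone C u"
          then have "(v, u) \<in> ?E\<^sup>*" unfolding cone_def by simp
          then have "(v, v) \<in> ?E\<^sup>+" using uv by (meson rtrancl_into_trancl1)
          then show False using acyc unfolding acyclic_def by blast
        qed
        have sub: "insert v {x\<in>cone C u. p \<in> Sset h w C x} \<subseteq> {x\<in>cone C v. p \<in> Sset h w C x}"
          using uv 1(2) p unfolding cone_def by (auto intro: rtrancl_into_rtrancl)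
        have finA: "finite {x\<in>cone C v. p \<in> Sset h w C x}" unfolding cone_def using finV by simp
        have "(\<Sum>x\<in>insert v {x\<in>cone C u. p \<in> Sset h w C x}. fanin C x) \<le> (\<Sum>x\<in>{x\<in>cone C v. p \<in> Sset h w C x}. fanin C x)"
          by (rule sum_mono2[OF finA sub]) simp
        moreover have "(\<Sum>x\<in>insert v {x\<in>cone C u. p \<in> Sset h w C x}. fanin C x) = k + (\<Sum>x\<in>{x\<in>cone C u. p \<in> Sset h w C x}. fanin C x)"
          using vn fk finite_subset[OF sub finA] by simp
        ultimately show ?thesis using ccu unfolding c_def u_def[symmetric] by (smt (verit) of_nat_add of_nat_mono)
      qed
      show ?thesis using p1 p2 by blast
    qed
  qed
qed



lemma exists_circuit:
  assumes fin: "finite \<T>" and sub: "\<And>T. T \<in> \<T> \<Longrightarrow> T \<subseteq> image h w" and ne: "\<And>T. T \<in> \<T> \<Longrightarrow> T \<noteq> {}"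
  shows "\<exists>C. or_computes h w \<T> C"
proof -
  obtain f where f: "bij_betw f \<T> {0..<card \<T>}" using ex_bij_betw_finite_nat[OF fin] by blast
  define ip where "ip = (\<lambda>(i,j). i * w + (j::nat))"
  define op where "op = (\<lambda>T. h * w + f T)"
  define E where "E = {(ip p, op T) | p T. T \<in> \<T> \<and> p \<in> T}"
  define V where "V = ip ` image h w \<union> op ` \<T>"
  define C where "C = \<lparr>nodes = V, edges = E, inp = ip, out = op\<rparr>"
  have iplt: "ip p < h * w" if pI: "p \<in> image h w" for p
  proof -
    obtain i j where p: "p = (i,j)" "i < h" "j < w" using pI unfolding Defs.image_def by (cases p) auto
    have "i * w + j < i * w + w" using p by simp
    also have "\<dots> = Suc i * w" by simp
    also have "\<dots> \<le> h * w" using p by (intro mult_le_mono1) simp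
    finally show ?thesis unfolding ip_def p by simp
  qed
  have ipinj: "inj_on ip (image h w)"
  proof (rule inj_onI)
    fix p q assume pq: "p \<in> image h w" "q \<in> image h w" "ip p = ip q"
    obtain i j where p: "p = (i,j)" "j < w" using pq unfolding Defs.image_def by (cases p) auto
    obtain i' j' where q: "q = (i',j')" "j' < w" using pq unfolding Defs.image_def by (cases q) auto
    have e: "i * w + j = i' * w + j'" using pq(3) unfolding ip_def p q by simp
    then have "(i * w + j) mod w = (i' * w + j') mod w" by simp
    then have jj: "j = j'" using p q by simp
    then have "i * w = i' * w" using e by simp
    then have "i = i'" using p by simp
    then show "p = q" using p q jj by simp
  qed
  have opinj: "inj_on op \<T>" using bij_betw_imp_inj_on[OF f] unfolding op_def inj_on_def by auto
  have Ecls: "(a, b) \<in> E \<Longrightarrow> a < h * w \<and> b \<ge> h * w" for a b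
    unfolding E_def op_def using iplt sub by auto
  have Etr: "(a, b) \<in> E\<^sup>+ \<Longrightarrow> a < h * w \<and> b \<ge> h * w" for a b
  proof (induction rule: trancl.induct)
    case (r_into_trancl a b) then show ?case using Ecls by blast
  next
    case (trancl_into_trancl a b c) then show ?case using Ecls by fastforce
  qed
  have acyc: "acyclic E" unfolding acyclic_def using Etr by fastforce
  have inE: "(u, op T) \<in> E \<longleftrightarrow> (\<exists>p\<in>T. u = ip p)" if T: "T \<in> \<T>" for u T
    unfolding E_def using opinj T unfolding inj_on_def by blast
  have ic: "is_circuit h w \<T> C"
    unfolding is_circuit_def C_def
  proof (simp, intro conjI)
    show "finite V" unfolding V_def using fin by (simp add: Defs.image_def finite_subset[of _ "{..<h} \<times> {..<w}"])
    show "E \<subseteq> V \<times> V" unfolding E_def V_def using sub by blast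
    show "acyclic E" by (rule acyc)
    show "inj_on ip (image h w)" by (rule ipinj)
    show "ip ` image h w \<subseteq> V" unfolding V_def by blast
    show "\<forall>p\<in>image h w. \<forall>u. (u, ip p) \<notin> E" using Ecls iplt by fastforce
    show "\<forall>v\<in>V. (\<forall>u. (u, v) \<notin> E) \<longrightarrow> v \<in> ip ` image h w"
    proof (intro ballI impI)
      fix v assume v: "v \<in> V" and no: "\<forall>u. (u, v) \<notin> E"
      show "v \<in> ip ` image h w"
      proof (rule ccontr)
        assume "v \<notin> ip ` image h w"
        then obtain T where T: "T \<in> \<T>" "v = op T" using v unfolding V_def by auto
        obtain p where "p \<in> T" using ne[OF T(1)] by auto
        then have "(ip p, v) \<in> E" using inE[OF T(1)] T by auto
        then show False using no by blast
      qed
    qed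
    show "inj_on op \<T>" by (rule opinj)
    show "op ` \<T> \<subseteq> V" unfolding V_def by blast
    show "\<forall>T\<in>\<T>. \<forall>v. (op T, v) \<notin> E" using Ecls unfolding op_def by fastforce
  qed
  have "or_computes h w \<T> C" unfolding or_computes_def
  proof (intro conjI ic allI impI ballI)
    fix x val T assume ev: "or_eval h w C x val" and T: "T \<in> \<T>"
    have oV: "op T \<in> V" unfolding V_def using T by blast
    have hasin: "\<exists>u. (u, op T) \<in> E" using ne[OF T] inE[OF T] by blast
    have "val (op T) = (\<exists>u. (u, op T) \<in> E \<and> val u)"
      using ev oV hasin unfolding or_eval_def C_def by simp
    also have "\<dots> = (\<exists>p\<in>T. val (ip p))" using inE[OF T] by auto
    also have "\<dots> = (\<exists>p\<in>T. x p)" using ev sub[OF T] unfolding or_eval_def C_def by auto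
    finally show "val (out C T) = (\<exists>p\<in>T. x p)" unfolding C_def by simp
  qed
  then show ?thesis by blast
qed



lemma good_card: assumes "good w k P" shows "card P = 2^k"
proof -
  have "inj_on fst P" using good_func[OF assms] by (auto simp: inj_on_def)
  then have "card P = card (fst ` P)" by (simp add: card_image)
  then show ?thesis using good_fst[OF assms] by simp
qed

lemma cardE: assumes ic: "is_circuit h w \<T> C" shows "card (edges C) = (\<Sum>v\<in>nodes C. fanin C v)"
proof -
  have finV: "finite (nodes C)" and EV: "edges C \<subseteq> nodes C \<times> nodes C" using ic_fin[OF ic] ic_EV[OF ic] by auto
  have eq: "edges C = (\<lambda>(v,u). (u,v)) ` (SIGMA v:nodes C. {u. (u,v) \<in> edges C})" using EV by force
  have inj: "inj_on (\<lambda>(v,u). (u::nat,v::nat)) (SIGMA v:nodes C. {u. (u,v) \<in> edges C})" by (auto simp: inj_on_def)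
  have fin2: "\<forall>v\<in>nodes C. finite {u. (u,v) \<in> edges C}"
    using EV finV by (auto intro: finite_subset[of _ "nodes C"])
  show ?thesis unfolding fanin_def by (subst eq, subst card_image[OF inj]) (simp add: finV fin2)
qed

lemma lower:
  assumes w2: "w \<ge> 2" and dh: "2^d \<le> h" and dD: "d \<le> D"
    and oc: "or_computes h w {Q \<inter> image h w | Q. Q \<in> FHT_level w D} C"
  shows "3 * real w * 2^d * log 3 (2^d) \<le> real (card (edges C))"
proof -
  define \<T> where "\<T> = {Q \<inter> image h w | Q. Q \<in> FHT_level w D}"
  have oc: "or_computes h w \<T> C" using oc unfolding \<T>_def .
  have ic: "is_circuit h w \<T> C" using oc unfolding or_computes_def by simp
  have w0: "w > 0" using w2 by simp
  let ?E = "edges C" and ?V = "nodes C"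
  have finV: "finite ?V" using ic_fin[OF ic] .
  define Bt where "Bt = image (2^d) w"
  define Ld where "Ld = FHT_level w d"
  have Bth: "Bt \<subseteq> image h w" unfolding Bt_def by (rule image_mono2[OF dh])
  have Tsub: "T \<subseteq> image h w" if "T \<in> \<T>" for T using that unfolding \<T>_def by auto
  have beta: "T \<inter> Bt \<in> Ld" if T: "T \<in> \<T>" for T
  proof -
    obtain Q where Q: "Q \<in> FHT_level w D" "T = Q \<inter> image h w" using T unfolding \<T>_def by auto
    have "T \<inter> Bt = Q \<inter> image (2^d) w" using Q(2) Bth unfolding Bt_def by auto
    then show ?thesis using level_trunc[OF w0 dD Q(1)] unfolding Ld_def by simp
  qed
  have finLd: "finite Ld" unfolding Ld_def by (rule level_finite)
  have cLd: "card Ld = w * 2^d" unfolding Ld_def by (rule level_card[OF w2])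
  define S' where "S' v = Sset h w C v \<inter> Bt" for v
  define R where "R v = {T\<in>\<T>. (v, out C T) \<in> ?E\<^sup>*}" for v
  define Bv where "Bv v = (\<lambda>T. T \<inter> Bt) ` R v" for v
  have BvL: "Bv v \<subseteq> Ld" for v unfolding Bv_def R_def using beta by auto
  have prod: "card (Bv v) * card (S' v) \<le> 2^d" for v
  proof -
    have "Bv v \<subseteq> {P\<in>Ld. S' v \<subseteq> P}"
    proof
      fix P assume "P \<in> Bv v"
      then obtain T where T: "T \<in> \<T>" "(v, out C T) \<in> ?E\<^sup>*" "P = T \<inter> Bt" unfolding Bv_def R_def by auto
      have "Sset h w C v \<subseteq> T" by (rule Sset_out[OF oc T(1) Tsub[OF T(1)] T(2)])
      then show "P \<in> {P\<in>Ld. S' v \<subseteq> P}" using T beta unfolding S'_def by auto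
    qed
    then have "card (Bv v) \<le> card {P\<in>Ld. S' v \<subseteq> P}" using finLd by (intro card_mono) auto
    then have "card (Bv v) * card (S' v) \<le> card {P\<in>Ld. S' v \<subseteq> P} * card (S' v)" by (rule mult_le_mono1)
    also have "\<dots> \<le> 2^d" unfolding Ld_def by (rule rect[OF w2])
    finally show ?thesis .
  qed
  define X where "X P = (\<Sum>v\<in>{v\<in>?V. P \<in> Bv v}. fanin C v * card (S' v))" for P
  have step1: "(\<Sum>v\<in>?V. fanin C v * card (S' v) * card (Bv v)) \<le> 2^d * card ?E"
  proof -
    have "(\<Sum>v\<in>?V. fanin C v * card (S' v) * card (Bv v)) \<le> (\<Sum>v\<in>?V. fanin C v * 2^d)"
      using prod by (intro sum_mono) (simp add: mult.assoc mult.commute[of "card (S' _)"] mult_le_mono2)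
    also have "\<dots> = 2^d * card ?E" using cardE[OF ic] by (simp add: sum_distrib_right mult.commute)
    finally show ?thesis .
  qed
  have step2: "(\<Sum>v\<in>?V. fanin C v * card (S' v) * card (Bv v)) = (\<Sum>P\<in>Ld. X P)"
  proof -
    have "(\<Sum>v\<in>?V. fanin C v * card (S' v) * card (Bv v)) = (\<Sum>v\<in>?V. \<Sum>P\<in>{P\<in>Ld. P \<in> Bv v}. fanin C v * card (S' v))"
    proof (intro sum.cong refl)
      fix v
      have "{P\<in>Ld. P \<in> Bv v} = Bv v" using BvL by auto
      then show "fanin C v * card (S' v) * card (Bv v) = (\<Sum>P\<in>{P\<in>Ld. P \<in> Bv v}. fanin C v * card (S' v))" by simp
    qed
    also have "\<dots> = (\<Sum>P\<in>Ld. X P)" unfolding X_def by (rule sum.swap_restrict[OF finV finLd])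
    finally show ?thesis .
  qed
  have step3: "3 * real (2^d) * log 3 (real (2^d)) \<le> real (X P)" if P: "P \<in> Ld" for P
  proof -
    obtain Q where Q: "Q \<in> FHT_level w D" "Q \<inter> image (2^d) w = P" using level_ext[OF w0 dD] P unfolding Ld_def by blast
    define T where "T = Q \<inter> image h w"
    have T: "T \<in> \<T>" unfolding T_def \<T>_def using Q by auto
    have TB: "T \<inter> Bt = P" using Q(2) Bth unfolding T_def Bt_def by auto
    define ot where "ot = out C T"
    have oV: "ot \<in> ?V" unfolding ot_def using ic_outV[OF ic T] .
    have So: "S' ot = P" unfolding S'_def ot_def sem[OF oc T Tsub[OF T]] using TB .
    have gP: "good w d P" using level_good[OF w0] P unfolding Ld_def by blast
    have cP: "card P = 2^d" using good_card[OF gP] .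
    have finP: "finite P" using good_finite[OF gP] .
    have Pne: "P \<noteq> {}" using cP finP by auto
    obtain c where c1: "(\<Sum>p\<in>Sset h w C ot \<inter> Bt. 3 powr (- c p / 3)) \<le> 1"
      and c2: "\<forall>p\<in>Sset h w C ot \<inter> Bt. c p \<le> real (\<Sum>u\<in>{u\<in>cone C ot. p \<in> Sset h w C u}. fanin C u)"
      using cost[OF ic oV, of Bt] by blast
    have finC: "finite (cone C ot)" unfolding cone_def using finV by simp
    have Ssub: "S' v \<subseteq> S' ot" if "v \<in> cone C ot" for v
      using Sset_mono[of v ot C h w] that unfolding cone_def S'_def by auto
    have "(\<Sum>v\<in>cone C ot. fanin C v * card (S' v)) = (\<Sum>v\<in>cone C ot. \<Sum>p\<in>{p\<in>S' ot. p \<in> S' v}. fanin C v)"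
    proof (intro sum.cong refl)
      fix v assume "v \<in> cone C ot"
      then have "{p\<in>S' ot. p \<in> S' v} = S' v" using Ssub by auto
      then show "fanin C v * card (S' v) = (\<Sum>p\<in>{p\<in>S' ot. p \<in> S' v}. fanin C v)" by simp
    qed
    also have "\<dots> = (\<Sum>p\<in>S' ot. \<Sum>v\<in>{v\<in>cone C ot. p \<in> S' v}. fanin C v)"
      using finP So by (intro sum.swap_restrict[OF finC]) auto
    also have "\<dots> = (\<Sum>p\<in>S' ot. \<Sum>v\<in>{v\<in>cone C ot. p \<in> Sset h w C v}. fanin C v)"
      by (intro sum.cong refl) (auto simp: S'_def)
    finally have eq: "(\<Sum>v\<in>cone C ot. fanin C v * card (S' v)) = (\<Sum>p\<in>S' ot. \<Sum>v\<in>{v\<in>cone C ot. p \<in> Sset h w C v}. fanin C v)" .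
    have "3 * real (card P) * log 3 (real (card P)) \<le> (\<Sum>p\<in>P. c p)"
      by (rule jensen3[OF finP Pne]) (use c1 So in \<open>simp add: S'_def\<close>)
    also have "\<dots> \<le> (\<Sum>p\<in>P. real (\<Sum>v\<in>{v\<in>cone C ot. p \<in> Sset h w C v}. fanin C v))"
      using c2 So by (intro sum_mono) (auto simp: S'_def)
    also have "\<dots> = real (\<Sum>v\<in>cone C ot. fanin C v * card (S' v))" unfolding eq So by simp
    also have "(\<Sum>v\<in>cone C ot. fanin C v * card (S' v)) \<le> X P"
    proof -
      have "cone C ot \<subseteq> {v\<in>?V. P \<in> Bv v}"
      proof
        fix v assume v: "v \<in> cone C ot"
        then have "T \<in> R v" unfolding cone_def R_def ot_def using T by auto
        then have "P \<in> Bv v" unfolding Bv_def using TB by force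
        then show "v \<in> {v\<in>?V. P \<in> Bv v}" using v unfolding cone_def by auto
      qed
      then show ?thesis unfolding X_def using finV by (intro sum_mono2) auto
    qed
    finally show ?thesis using cP by simp
  qed
  have "real (card Ld) * (3 * real (2^d) * log 3 (real (2^d))) \<le> real (\<Sum>P\<in>Ld. X P)"
    using sum_mono[of Ld "\<lambda>_. 3 * real (2^d) * log 3 (real (2^d))" "\<lambda>P. real (X P)"] step3 by simp
  also have "\<dots> \<le> real (2^d * card ?E)" using step1 step2 by (intro of_nat_mono) simp
  finally have "real w * 2^d * (3 * 2^d * log 3 (2^d)) \<le> 2^d * real (card ?E)" using cLd by simp
  then have "2^d * (3 * real w * 2^d * log 3 (2^d)) \<le> 2^d * real (card ?E)" by (simp add: algebra_simps)
  then show ?thesis by simp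
qed

theorem theorem2:
  fixes h w :: nat
  assumes "w \<ge> 2" and "h \<ge> 1"
  shows "real (OR_complexity h w (FHT h w))
           \<ge> 3 * real w * (2 ^ nat \<lfloor>log 2 (real h)\<rfloor>) * log 3 (2 ^ nat \<lfloor>log 2 (real h)\<rfloor>)"
proof -
  define d where "d = nat \<lfloor>log 2 (real h)\<rfloor>"
  define D where "D = nat \<lceil>log 2 (real h)\<rceil>"
  have w0: "w > 0" using assms by simp
  have h0: "real h > 0" using assms by simp
  have lg0: "log 2 (real h) \<ge> 0" using assms by simp
  have dh: "2^d \<le> h"
  proof -
    have "real d = real_of_int \<lfloor>log 2 (real h)\<rfloor>" unfolding d_def using lg0 by simp
    then have "real d \<le> log 2 (real h)" by simp
    then have "2 powr real d \<le> 2 powr log 2 (real h)" by (intro powr_mono) auto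
    also have "\<dots> = real h" using h0 by simp
    finally have "real (2^d) \<le> real h" by (simp add: powr_realpow)
    then show ?thesis by linarith
  qed
  have dD: "d \<le> D" unfolding d_def D_def by (intro nat_mono) (meson floor_le_ceiling)
  have FHTeq: "FHT h w = {Q \<inter> image h w | Q. Q \<in> FHT_level w D}" unfolding FHT_def D_def by simp
  define S where "S = {C. or_computes h w (FHT h w) C}"
  have fin: "finite (FHT h w)" unfolding FHTeq
    using finite_imageI[OF level_finite[of w D], of "\<lambda>Q. Q \<inter> image h w"] by (simp add: setcompr_eq_image)
  have ne: "S \<noteq> {}"
  proof -
    have "\<exists>C. or_computes h w (FHT h w) C"
    proof (rule exists_circuit[OF fin])
      fix T assume "T \<in> FHT h w" then show "T \<subseteq> image h w" unfolding FHTeq by auto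
    next
      fix T assume "T \<in> FHT h w"
      then obtain Q where Q: "Q \<in> FHT_level w D" "T = Q \<inter> image h w" unfolding FHTeq by auto
      have g: "good w D Q" using level_good[OF w0 Q(1)] .
      have b: "(0, bot_col Q) \<in> Q" using bot_col_good[OF g] .
      moreover have "bot_col Q < w" using good_col[OF g b] by simp
      ultimately have "(0, bot_col Q) \<in> T" using Q(2) assms unfolding Defs.image_def by auto
      then show "T \<noteq> {}" by auto
    qed
    then show ?thesis unfolding S_def by auto
  qed
  have "OR_complexity h w (FHT h w) \<in> (\<lambda>C. card (edges C)) ` S"
    unfolding OR_complexity_def S_def[symmetric] using ne by (intro Inf_nat_def1) auto
  then obtain C where C: "C \<in> S" "OR_complexity h w (FHT h w) = card (edges C)" by auto
  have oc: "or_computes h w {Q \<inter> image h w | Q. Q \<in> FHT_level w D} C" using C(1) unfolding S_def FHTeq by simp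
  show ?thesis using lower[OF assms(1) dh dD oc] C(2) unfolding d_def by simp
qed

end
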